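(* Let $\mathcal{N}$ be a Beeping Network with $n$ nodes and maximum degree $\Delta$, where each node has a unique ID from $[1,n^c]$ for a constant $c\ge 1$, and each node $v$ knows $n$, the parameter $c$, the maximum degree $\Delta$, and its neighborhood $N(v)$ (the IDs of its neighbors), and holds a message $m_v$ of length at most $B>0$ bits. Then there is a deterministic distributed algorithm that solves Local Broadcast on $\mathcal{N}$ in $O(B\Delta^2\log n)$ beeping rounds.
   Context: A Beeping Network is a network of $n$ nodes whose topology is an undirected graph $G=(V,E)$; $N(v)$ denotes the set of neighbors of $v$. Time is divided into synchronous rounds and all nodes start simultaneously. In each round every node either beeps or listens; a listening node hears "silence" if no neighbor beeps and "noise" if at least one neighbor beeps, and cannot distinguish one beep from several. A beeping node receives no feedback in that round. Complexity is measured in rounds. Local Broadcast: every node $v$ holds a message $m_v$, and the problem is solved once, for every $v$, every node in $N(v)$ knows $m_v$. *)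

theory Defs
  imports Complex_Main
begin

text \<open>Nodes are identified with their (unique) IDs, which are natural numbers.
  A network is a finite vertex set V of IDs with a symmetric irreflexive
  edge relation E on V.\<close>

definition graph_on :: "nat set \<Rightarrow> (nat \<Rightarrow> nat \<Rightarrow> bool) \<Rightarrow> bool" where
  "graph_on V E \<longleftrightarrow> finite V \<and>
     (\<forall>u v. E u v \<longrightarrow> u \<in> V \<and> v \<in> V \<and> u \<noteq> v \<and> E v u)"

definition nbrs :: "nat set \<Rightarrow> (nat \<Rightarrow> nat \<Rightarrow> bool) \<Rightarrow> nat \<Rightarrow> nat set" where
  "nbrs V E v = {u \<in> V. E v u}"

definition is_max_degree :: "nat set \<Rightarrow> (nat \<Rightarrow> nat \<Rightarrow> bool) \<Rightarrow> nat \<Rightarrow> bool" where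
  "is_max_degree V E D \<longleftrightarrow>
     (\<forall>v\<in>V. card (nbrs V E v) \<le> D) \<and> (\<exists>v\<in>V. card (nbrs V E v) = D)"

text \<open>What a node observes in one round: it beeped (no feedback), or it
  listened and heard noise (True) or silence (False).\<close>
datatype obs = Beeped | Heard bool

record node_input =
  inp_n     :: nat
  inp_c     :: real
  inp_delta :: nat
  inp_id    :: nat
  inp_nbrs  :: "nat set"
  inp_msg   :: "bool list"

text \<open>A deterministic distributed algorithm: every node runs the same
  beep rule, which decides from its local input and its history of
  observations whether to beep in the next round; the output rule gives,
  from local input and history, the node's current belief about the message
  of the node with a given ID.  (Using the full history as state is without
  loss of generality for deterministic algorithms.)\<close>
type_synonym beep_rule = "node_input \<Rightarrow> obs list \<Rightarrow> bool"
type_synonym out_rule = "node_input \<Rightarrow> obs list \<Rightarrow> nat \<Rightarrow> bool list option"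

definition local_input ::
  "nat \<Rightarrow> real \<Rightarrow> nat \<Rightarrow> nat set \<Rightarrow> (nat \<Rightarrow> nat \<Rightarrow> bool) \<Rightarrow> (nat \<Rightarrow> bool list)
   \<Rightarrow> nat \<Rightarrow> node_input" where
  "local_input n c D V E m v =
     \<lparr> inp_n = n, inp_c = c, inp_delta = D, inp_id = v,
       inp_nbrs = nbrs V E v, inp_msg = m v \<rparr>"

primrec history ::
  "beep_rule \<Rightarrow> (nat \<Rightarrow> node_input) \<Rightarrow> nat set \<Rightarrow> (nat \<Rightarrow> nat \<Rightarrow> bool)
   \<Rightarrow> nat \<Rightarrow> nat \<Rightarrow> obs list" where
  "history A inp V E 0 v = []"
| "history A inp V E (Suc t) v =
     history A inp V E t v @
       [if A (inp v) (history A inp V E t v) then Beeped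
        else Heard (\<exists>u\<in>nbrs V E v. A (inp u) (history A inp V E t u))]"

definition local_broadcast_solved ::
  "beep_rule \<Rightarrow> out_rule \<Rightarrow> nat \<Rightarrow> real \<Rightarrow> nat \<Rightarrow> nat set \<Rightarrow> (nat \<Rightarrow> nat \<Rightarrow> bool)
   \<Rightarrow> (nat \<Rightarrow> bool list) \<Rightarrow> nat \<Rightarrow> bool" where
  "local_broadcast_solved A Out n c D V E m t \<longleftrightarrow>
     (\<forall>v\<in>V. \<forall>u\<in>nbrs V E v.
        Out (local_input n c D V E m u) (history A (local_input n c D V E m) V E t u) v
          = Some (m v))"

end

theory Submission
  imports Defs "HOL-Library.FuncSet"
begin

definition good :: "nat \<Rightarrow> nat \<Rightarrow> nat \<Rightarrow> (nat \<Rightarrow> nat \<Rightarrow> nat) \<Rightarrow> bool" where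
 "good N k r g \<longleftrightarrow> (\<forall>x<N. \<forall>i<r. g x i < 2*k) \<and>
    (\<forall>x<N. \<forall>Y. Y \<subseteq> {..<N} \<longrightarrow> card Y \<le> k \<longrightarrow> x \<notin> Y \<longrightarrow> (\<exists>i<r. \<forall>y\<in>Y. g y i \<noteq> g x i))"

lemma bad_card:
  fixes N k r q x :: nat and ys :: "nat \<Rightarrow> nat"
  defines "S \<equiv> {..<N} \<times> {..<r}"
  assumes x: "x < N" and ys: "ys \<in> {..<k} \<rightarrow>\<^sub>E {..<N}" and xn: "x \<notin> ys ` {..<k}"
  shows "card {G \<in> S \<rightarrow>\<^sub>E {..<q}. \<forall>i<r. \<exists>j<k. G (ys j, i) = G (x, i)}
          \<le> q ^ (N*r - r) * k ^ r"
proof -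
  let ?B = "{G \<in> S \<rightarrow>\<^sub>E {..<q}. \<forall>i<r. \<exists>j<k. G (ys j, i) = G (x, i)}"
  let ?S' = "S - {x} \<times> {..<r}"
  let ?T = "(?S' \<rightarrow>\<^sub>E {..<q}) \<times> ({..<r} \<rightarrow>\<^sub>E {..<k})"
  define \<phi> where "\<phi> G = (restrict G ?S', restrict (\<lambda>i. LEAST j. j<k \<and> G (ys j, i) = G (x, i)) {..<r})" for G :: "nat \<times> nat \<Rightarrow> nat"
  have least: "(LEAST j. j<k \<and> G (ys j, i) = G (x, i)) < k \<and> G (ys (LEAST j. j<k \<and> G (ys j, i) = G (x, i)), i) = G (x, i)"
    if "G \<in> ?B" "i < r" for G i
  proof -
    from that obtain j where "j<k \<and> G (ys j, i) = G (x, i)" by auto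
    then show ?thesis by (rule LeastI)
  qed
  have inj: "inj_on \<phi> ?B"
  proof (rule inj_onI)
    fix G1 G2 assume g1: "G1 \<in> ?B" and g2: "G2 \<in> ?B" and eq: "\<phi> G1 = \<phi> G2"
    have r1: "restrict G1 ?S' = restrict G2 ?S'" and
      r2: "restrict (\<lambda>i. LEAST j. j<k \<and> G1 (ys j, i) = G1 (x, i)) {..<r}
         = restrict (\<lambda>i. LEAST j. j<k \<and> G2 (ys j, i) = G2 (x, i)) {..<r}"
      using eq unfolding \<phi>_def by auto
    show "G1 = G2"
    proof (rule PiE_ext[of G1 S "\<lambda>_. {..<q}"])
      show "G1 \<in> S \<rightarrow>\<^sub>E {..<q}" "G2 \<in> S \<rightarrow>\<^sub>E {..<q}" using g1 g2 by auto
      fix p assume p: "p \<in> S"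
      obtain a i where pai: "p = (a, i)" by force
      show "G1 p = G2 p"
      proof (cases "a = x")
        case False
        then have "p \<in> ?S'" using p pai by auto
        then show ?thesis using fun_cong[OF r1, of p] by simp
      next
        case True
        have ir: "i < r" using p pai S_def by auto
        define j where "j = (LEAST j. j<k \<and> G1 (ys j, i) = G1 (x, i))"
        have j2: "j = (LEAST j. j<k \<and> G2 (ys j, i) = G2 (x, i))"
          using fun_cong[OF r2, of i] ir unfolding j_def by simp
        have jk: "j < k" and e1: "G1 (ys j, i) = G1 (x, i)" using least[OF g1 ir] j_def by auto
        have e2: "G2 (ys j, i) = G2 (x, i)" using least[OF g2 ir] j2 by auto
        have "ys j \<noteq> x" using xn jk by auto
        moreover have "ys j < N" using ys jk by auto
        ultimately have "(ys j, i) \<in> ?S'" using ir S_def by auto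
        then have "G1 (ys j, i) = G2 (ys j, i)" using fun_cong[OF r1, of "(ys j, i)"] by simp
        then show ?thesis using e1 e2 True pai by simp
      qed
    qed
  qed
  have img: "\<phi> ` ?B \<subseteq> ?T"
  proof
    fix z assume "z \<in> \<phi> ` ?B"
    then obtain G where G: "G \<in> ?B" and z: "z = \<phi> G" by auto
    have "restrict G ?S' \<in> ?S' \<rightarrow>\<^sub>E {..<q}" using G by auto
    moreover have "restrict (\<lambda>i. LEAST j. j<k \<and> G (ys j, i) = G (x, i)) {..<r} \<in> {..<r} \<rightarrow>\<^sub>E {..<k}"
      using least[OF G] by auto
    ultimately show "z \<in> ?T" using z \<phi>_def by simp
  qed
  have finS: "finite S" using S_def by auto
  have "card ?B \<le> card ?T"
    by (rule card_inj_on_le[OF inj img]) (use finS in \<open>auto intro!: finite_PiE\<close>)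
  also have "card ?T = q ^ card ?S' * k ^ r"
    using finS by (simp add: card_PiE card_cartesian_product)
  also have "card ?S' = N*r - r"
  proof -
    have "{x} \<times> {..<r} \<subseteq> S" using x S_def by auto
    then have "card ?S' = card S - card ({x} \<times> {..<r})" using finS by (simp add: card_Diff_subset finite_subset)
    then show ?thesis using S_def by (simp add: card_cartesian_product)
  qed
  finally show ?thesis .
qed

lemma code_exists:
  fixes N k r :: nat
  assumes k: "k \<ge> 1" and Nr: "N ^ (k+1) < 2 ^ r"
  shows "\<exists>g. good N k r g"
proof (cases "N = 0")
  case True then show ?thesis unfolding good_def by auto
next
  case False
  then have N1: "N \<ge> 1" by simp
  define q where "q = 2*k"
  define S where "S = {..<N} \<times> {..<r}"
  define \<Omega> where "\<Omega> = S \<rightarrow>\<^sub>E {..<q}"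
  define I where "I = {(x, ys). x < N \<and> ys \<in> {..<k} \<rightarrow>\<^sub>E {..<N} \<and> x \<notin> ys ` {..<k}}"
  define Bad where "Bad = (\<lambda>(x, ys). {G \<in> S \<rightarrow>\<^sub>E {..<q}. \<forall>i<r. \<exists>j<k. G (ys j, i) = G (x, i)})"
  have finS: "finite S" using S_def by auto
  have finI: "finite I"
  proof -
    have "I \<subseteq> {..<N} \<times> ({..<k} \<rightarrow>\<^sub>E {..<N})" unfolding I_def by auto
    moreover have "finite ({..<N} \<times> ({..<k} \<rightarrow>\<^sub>E {..<N}))" by (auto intro!: finite_PiE)
    ultimately show ?thesis by (rule finite_subset)
  qed
  have cardI: "card I \<le> N ^ (k+1)"
  proof -
    have "I \<subseteq> {..<N} \<times> ({..<k} \<rightarrow>\<^sub>E {..<N})" unfolding I_def by auto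
    then have "card I \<le> card ({..<N} \<times> ({..<k} \<rightarrow>\<^sub>E {..<N}))"
      by (rule card_mono[rotated]) (auto intro!: finite_PiE)
    also have "\<dots> = N * N ^ k" by (simp add: card_cartesian_product card_PiE)
    finally show ?thesis by simp
  qed
  have cardBad: "card (Bad p) \<le> q ^ (N*r - r) * k ^ r" if "p \<in> I" for p
  proof -
    obtain x ys where p: "p = (x, ys)" by force
    show ?thesis using that unfolding p Bad_def I_def S_def
      by (simp add: bad_card)
  qed
  have "card (\<Union>p\<in>I. Bad p) \<le> (\<Sum>p\<in>I. card (Bad p))" by (rule card_UN_le[OF finI])
  also have "\<dots> \<le> (\<Sum>p\<in>I. q ^ (N*r - r) * k ^ r)" by (rule sum_mono) (rule cardBad)
  also have "\<dots> = card I * (q ^ (N*r - r) * k ^ r)" by simp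
  also have "\<dots> \<le> N ^ (k+1) * (q ^ (N*r - r) * k ^ r)" using cardI by simp
  also have "\<dots> < 2 ^ r * (q ^ (N*r - r) * k ^ r)"
  proof -
    have "q ^ (N*r - r) * k ^ r > 0" using k q_def by simp
    then show ?thesis using Nr by simp
  qed
  also have "\<dots> = q ^ (N*r)"
  proof -
    have "2 ^ r * (q ^ (N*r - r) * k ^ r) = (2*k)^r * q ^ (N*r - r)" by (simp add: power_mult_distrib)
    also have "\<dots> = q ^ (r + (N*r - r))" using q_def by (simp add: power_add)
    also have "r + (N*r - r) = N*r" using N1 by (metis le_add_diff_inverse mult_le_mono1 mult_1)
    finally show ?thesis by simp
  qed
  also have "\<dots> = card \<Omega>" using finS unfolding \<Omega>_def S_def by (simp add: card_PiE card_cartesian_product mult.commute)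
  finally have lt: "card (\<Union>p\<in>I. Bad p) < card \<Omega>" .
  have sub: "(\<Union>p\<in>I. Bad p) \<subseteq> \<Omega>" unfolding Bad_def \<Omega>_def by auto
  have "\<exists>G\<in>\<Omega>. G \<notin> (\<Union>p\<in>I. Bad p)"
  proof (rule ccontr)
    assume "\<not> ?thesis"
    then have "\<Omega> \<subseteq> (\<Union>p\<in>I. Bad p)" by auto
    then have "\<Omega> = (\<Union>p\<in>I. Bad p)" using sub by auto
    then show False using lt by simp
  qed
  then obtain G where G\<Omega>: "G \<in> \<Omega>" and Gnot: "\<And>p. p \<in> I \<Longrightarrow> G \<notin> Bad p" by auto
  define g where "g x i = G (x, i)" for x i
  have r0: "r > 0"
  proof (rule ccontr)
    assume "\<not> r > 0" then have "r = 0" by simp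
    then show False using Nr N1 by simp
  qed
  show ?thesis
  proof (rule exI[of _ g], unfold good_def, intro conjI allI impI)
    fix x i assume "x < N" "i < r"
    then show "g x i < 2 * k" using G\<Omega> unfolding g_def \<Omega>_def S_def q_def by auto
  next
    fix x Y assume x: "x < N" and Y: "Y \<subseteq> {..<N}" and cY: "card Y \<le> k" and xY: "x \<notin> Y"
    show "\<exists>i<r. \<forall>y\<in>Y. g y i \<noteq> g x i"
    proof (cases "Y = {}")
      case True then show ?thesis using r0 by auto
    next
      case False
      have finY: "finite Y" using Y finite_subset by blast
      then obtain h where h: "bij_betw h {0..<card Y} Y" using ex_bij_betw_nat_finite by blast
      have cY0: "card Y > 0" using False finY by (simp add: card_gt_0_iff)
      define ys where "ys = restrict (\<lambda>j. if j < card Y then h j else h 0) {..<k}"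
      have hY: "\<And>j. j < card Y \<Longrightarrow> h j \<in> Y" using h bij_betwE by fastforce
      have ysY: "ys j \<in> Y" if "j < k" for j using that hY cY0 unfolding ys_def by auto
      have ysPi: "ys \<in> {..<k} \<rightarrow>\<^sub>E {..<N}"
      proof -
        have "\<forall>j\<in>{..<k}. ys j \<in> {..<N}" using ysY Y by blast
        moreover have "ys \<in> extensional {..<k}" unfolding ys_def by simp
        ultimately show ?thesis by (simp add: PiE_iff)
      qed
      have onto: "\<exists>j<k. ys j = y" if "y \<in> Y" for y
      proof -
        have "y \<in> h ` {0..<card Y}" using h that by (simp add: bij_betw_imp_surj_on)
        then obtain j where j: "j \<in> {0..<card Y}" "h j = y" by blast
        then have "j < k" using cY by simp
        moreover have "ys j = y" using j \<open>j < k\<close> by (simp add: ys_def)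
        ultimately show ?thesis by blast
      qed
      have "x \<notin> ys ` {..<k}" using ysY xY by blast
      then have "(x, ys) \<in> I" by (simp add: I_def x ysPi)
      then have "G \<notin> Bad (x, ys)" by (rule Gnot)
      then have "\<exists>i<r. \<forall>j<k. G (ys j, i) \<noteq> G (x, i)" using G\<Omega> unfolding Bad_def \<Omega>_def by auto
      then obtain i where i: "i < r" "\<forall>j<k. G (ys j, i) \<noteq> G (x, i)" by auto
      show ?thesis
      proof (intro exI[of _ i] conjI ballI)
        show "i < r" by (rule i(1))
        fix y assume "y \<in> Y"
        then obtain j where "j < k" "ys j = y" using onto by blast
        then show "g y i \<noteq> g x i" using i(2) unfolding g_def by auto
      qed
    qed
  qed
qed



definition lg :: "nat \<Rightarrow> nat" where "lg n = (LEAST l. n \<le> 2 ^ l)"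
definition bb :: "nat \<Rightarrow> real \<Rightarrow> nat" where "bb n c = lg n * nat \<lceil>c\<rceil> + 1"
definition rr :: "nat \<Rightarrow> real \<Rightarrow> nat \<Rightarrow> nat" where "rr n c D = (D + 1) * bb n c + 1"
definition LL :: "nat \<Rightarrow> real \<Rightarrow> nat \<Rightarrow> nat" where "LL n c D = rr n c D * (2 * D)"
definition code :: "nat \<Rightarrow> real \<Rightarrow> nat \<Rightarrow> nat \<Rightarrow> nat \<Rightarrow> nat" where
  "code n c D = (SOME g. good (2 ^ bb n c) D (rr n c D) g)"

definition sched :: "node_input \<Rightarrow> nat \<Rightarrow> bool" where
  "sched inp R = (let n = inp_n inp; c = inp_c inp; D = inp_delta inp; L = LL n c D;
      g = code n c D; s = R mod (2 * L); ph = R div (2 * L); j = s mod L; msg = inp_msg inp in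
      g (inp_id inp) (j div (2 * D)) = j mod (2 * D) \<and> ph < length msg \<and> (s < L \<or> msg ! ph))"

definition Abeep :: beep_rule where "Abeep inp h = sched inp (length h)"

definition Aout :: out_rule where
  "Aout inp h w = (let n = inp_n inp; c = inp_c inp; D = inp_delta inp; L = LL n c D;
      g = code n c D; Y = (inp_nbrs inp - {w}) \<union> {inp_id inp};
      i = (LEAST i. i < rr n c D \<and> (\<forall>y\<in>Y. g y i \<noteq> g w i)); j = i * (2 * D) + g w i;
      P = length h div (2 * L); heard = (\<lambda>x. h ! x = Heard True) in
      Some (map (\<lambda>p. heard (p * (2 * L) + L + j)) (filter (\<lambda>p. heard (p * (2 * L) + j)) [0..<P])))"

lemma history_eq:
  "history Abeep inp V E t v = map (\<lambda>R. if sched (inp v) R then Beeped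
      else Heard (\<exists>u\<in>nbrs V E v. sched (inp u) R)) [0..<t]"
proof (induction t arbitrary: v)
  case 0 then show ?case by simp
next
  case (Suc t)
  have l: "\<And>x. length (history Abeep inp V E t x) = t" using Suc by simp
  show ?case using Suc by (simp add: Abeep_def l)
qed

lemma filter_less_upt: "filter (\<lambda>p. p < l) [0..<B] = [0..<min l B]"
proof (induction B)
  case 0 then show ?case by simp
next
  case (Suc B)
  show ?case
  proof (cases "B < l")
    case True
    then have "min l (Suc B) = Suc B" "min l B = B" by auto
    then show ?thesis using Suc True by simp
  next
    case False
    then have "min l (Suc B) = l" "min l B = l" by auto
    then show ?thesis using Suc False by simp
  qed
qed

lemma sched_at:
  assumes D: "inp_delta inp \<ge> 1" and i: "i < rr (inp_n inp) (inp_c inp) (inp_delta inp)"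
    and a: "a < 2 * inp_delta inp" and s: "s \<le> 1"
  shows "sched inp (p * (2 * LL (inp_n inp) (inp_c inp) (inp_delta inp)) + s * LL (inp_n inp) (inp_c inp) (inp_delta inp) + (i * (2 * inp_delta inp) + a))
     = (code (inp_n inp) (inp_c inp) (inp_delta inp) (inp_id inp) i = a \<and> p < length (inp_msg inp) \<and> (s = 0 \<or> inp_msg inp ! p))"
proof -
  define D' where "D' = inp_delta inp"
  define L where "L = LL (inp_n inp) (inp_c inp) (inp_delta inp)"
  define j where "j = i * (2 * D') + a"
  have jL: "j < L"
  proof -
    have "j < i * (2*D') + 2 * D'" using a j_def D'_def by simp
    also have "\<dots> = (i+1) * (2*D')" by simp
    also have "\<dots> \<le> rr (inp_n inp) (inp_c inp) (inp_delta inp) * (2*D')" using i by (intro mult_right_mono) auto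
    finally show ?thesis unfolding L_def LL_def D'_def .
  qed
  have s01: "s = 0 \<or> s = 1" using s by auto
  have sj: "s * L + j < 2 * L" using s01 jL by auto
  have e: "p * (2 * L) + s * L + j = (s * L + j) + (2 * L) * p" by (simp add: algebra_simps)
  have L0': "2 * L > 0" using sj by simp
  have m1: "(p * (2 * L) + s * L + j) mod (2 * L) = s * L + j" unfolding e using sj by simp
  have d1: "(p * (2 * L) + s * L + j) div (2 * L) = p" unfolding e using sj L0' by simp
  have m2: "(s * L + j) mod L = j" using jL s01 by auto
  have D0: "D' > 0" using D D'_def by simp
  have m3: "j mod (2 * D') = a" using a D'_def j_def by simp
  have d3: "j div (2 * D') = i" using a D'_def j_def by simp
  have sL: "(s * L + j < L) = (s = 0)" using s01 jL by auto
  define R where "R = p * (2 * L) + s * L + j"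
  have U: "sched inp R = (code (inp_n inp) (inp_c inp) D' (inp_id inp) (((R mod (2*L)) mod L) div (2*D'))
      = ((R mod (2*L)) mod L) mod (2*D') \<and> R div (2*L) < length (inp_msg inp)
      \<and> (R mod (2*L) < L \<or> inp_msg inp ! (R div (2*L))))"
    unfolding sched_def Let_def L_def D'_def by simp
  have m1': "R mod (2*L) = s * L + j" using m1 R_def by simp
  have d1': "R div (2*L) = p" using d1 R_def by simp
  have "sched inp R = (code (inp_n inp) (inp_c inp) D' (inp_id inp) i = a \<and> p < length (inp_msg inp) \<and> (s = 0 \<or> inp_msg inp ! p))"
    unfolding U m1' d1' m2 m3 d3 sL by simp
  then show ?thesis unfolding R_def L_def j_def D'_def by simp
qed

lemma lg_ge: "n \<le> 2 ^ lg n"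
proof -
  have "n \<le> 2 ^ n" using less_exp[of n] by simp
  then show ?thesis unfolding lg_def by (rule LeastI)
qed

lemma lg_le_log:
  assumes n: "n \<ge> 2"
  shows "real (lg n) \<le> 2 * log 2 (real n)" and "1 \<le> log 2 (real n)"
proof -
  have l1: "lg n \<ge> 1"
  proof (rule ccontr)
    assume "\<not> lg n \<ge> 1" then have "lg n = 0" by simp
    then show False using lg_ge[of n] n by simp
  qed
  have "\<not> n \<le> 2 ^ (lg n - 1)"
    unfolding lg_def by (rule not_less_Least) (use l1 in \<open>simp add: lg_def\<close>)
  then have "real (2 ^ (lg n - 1)) < real n" by simp
  then have "2 powr real (lg n - 1) < real n" by (simp add: powr_realpow)
  then have "real (lg n - 1) < log 2 (real n)" using n by (subst less_log_iff) auto
  then have A: "real (lg n) - 1 < log 2 (real n)" using l1 by (simp add: of_nat_diff)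
  have "log 2 2 \<le> log 2 (real n)" using n by (subst log_le_cancel_iff) auto
  then show B: "1 \<le> log 2 (real n)" by simp
  show "real (lg n) \<le> 2 * log 2 (real n)" using A B by simp
qed

lemma id_bound:
  fixes c :: real
  assumes c: "c \<ge> 1" and n: "n \<ge> 1" and v: "real v \<le> real n powr c"
  shows "v < 2 ^ bb n c"
proof -
  have "real n powr c \<le> real n powr real (nat \<lceil>c\<rceil>)"
    using c n by (intro powr_mono) auto
  also have "\<dots> = real n ^ nat \<lceil>c\<rceil>" using n by (simp add: powr_realpow)
  also have "\<dots> \<le> real (2 ^ lg n) ^ nat \<lceil>c\<rceil>"
    using lg_ge[of n] by (intro power_mono) auto
  also have "\<dots> = real (2 ^ (lg n * nat \<lceil>c\<rceil>))" by (simp add: power_mult)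
  finally have "v \<le> 2 ^ (lg n * nat \<lceil>c\<rceil>)" using v by linarith
  also have "\<dots> < 2 ^ bb n c" unfolding bb_def by simp
  finally show ?thesis .
qed

theorem theorem1:
  fixes c :: real
  assumes "c \<ge> 1"
  shows "\<exists>(A :: beep_rule) (Out :: out_rule) (K :: real). K > 0 \<and>
    (\<forall>(n :: nat) (D :: nat) (B :: nat) (V :: nat set) (E :: nat \<Rightarrow> nat \<Rightarrow> bool)
        (m :: nat \<Rightarrow> bool list).
       graph_on V E \<and> card V = n \<and>
       (\<forall>v\<in>V. 1 \<le> v \<and> real v \<le> real n powr c) \<and>
       is_max_degree V E D \<and> B > 0 \<and> (\<forall>v\<in>V. length (m v) \<le> B)
       \<longrightarrow> (\<exists>t::nat. real t \<le> K * real B * real D ^ 2 * log 2 (real n) \<and>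
                  local_broadcast_solved A Out n c D V E m t))"
proof -
  have c1: "c \<ge> 1" by (rule assms)
  define cc where "cc = nat \<lceil>c\<rceil>"
  define K where "K = 16 * (real cc + 1)"
  have K0: "K > 0" unfolding K_def by simp
  show ?thesis
  proof (rule exI[of _ Abeep], rule exI[of _ Aout], rule exI[of _ K], intro conjI allI impI)
    show "K > 0" by (rule K0)
    fix n D B V E and m :: "nat \<Rightarrow> bool list"
    assume H: "graph_on V E \<and> card V = n \<and> (\<forall>v\<in>V. 1 \<le> v \<and> real v \<le> real n powr c) \<and>
       is_max_degree V E D \<and> B > 0 \<and> (\<forall>v\<in>V. length (m v) \<le> B)"
    then have G: "graph_on V E" and cV: "card V = n" and ids: "\<forall>v\<in>V. 1 \<le> v \<and> real v \<le> real n powr c"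
      and md: "is_max_degree V E D" and B0: "B > 0" and ml: "\<forall>v\<in>V. length (m v) \<le> B" by auto
    have finV: "finite V" using G graph_on_def by blast
    have Esym: "\<And>u v. E u v \<Longrightarrow> u \<in> V \<and> v \<in> V \<and> u \<noteq> v \<and> E v u" using G graph_on_def by blast
    have nbfin: "\<And>v. finite (nbrs V E v)" using finV unfolding nbrs_def by simp
    have deg: "\<And>v. v \<in> V \<Longrightarrow> card (nbrs V E v) \<le> D" using md is_max_degree_def by blast
    show "\<exists>t. real t \<le> K * real B * real D ^ 2 * log 2 (real n) \<and>
                  local_broadcast_solved Abeep Aout n c D V E m t"
    proof (cases "D = 0")
      case True
      have "local_broadcast_solved Abeep Aout n c D V E m 0"
        unfolding local_broadcast_solved_def
      proof (intro ballI)
        fix v u assume v: "v \<in> V" and u: "u \<in> nbrs V E v"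
        have "card (nbrs V E v) = 0" using deg[OF v] True by simp
        then have "nbrs V E v = {}" using nbfin by simp
        then show "Aout (local_input n c D V E m u) (history Abeep (local_input n c D V E m) V E 0 u) v = Some (m v)"
          using u by simp
      qed
      then show ?thesis using True by (intro exI[of _ 0]) simp
    next
      case False
      then have D1: "D \<ge> 1" by simp
      obtain v0 where v0: "v0 \<in> V" "card (nbrs V E v0) = D" using md is_max_degree_def by blast
      then have "nbrs V E v0 \<noteq> {}" using D1 by auto
      then obtain u0 where "u0 \<in> nbrs V E v0" by blast
      then have "E v0 u0" by (simp add: nbrs_def)
      then have "u0 \<in> V" "v0 \<noteq> u0" using Esym by auto
      then have "{u0, v0} \<subseteq> V" using v0 by auto
      then have "card {u0, v0} \<le> n" using finV cV card_mono by metis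
      then have n2: "n \<ge> 2" using \<open>v0 \<noteq> u0\<close> by simp
      define L where "L = LL n c D"
      define t where "t = 2 * L * B"
      define X where "X = lg n * cc"
      have bbX: "bb n c = X + 1" unfolding bb_def X_def cc_def by simp
      have L0: "L > 0" using D1 unfolding L_def LL_def rr_def by simp
      have tbound: "real t \<le> K * real B * real D ^ 2 * log 2 (real n)"
      proof -
        have "(D+1)*(X+1)+1 \<le> 2*D*(X+2)"
        proof -
          have xle: "X \<le> D * X" using D1 by simp
          have e1: "(D+1)*(X+1)+1 = D*X + X + D + 2" by (simp add: algebra_simps)
          have e2: "2*D*(X+2) = 2*(D*X) + 4*D" by (simp add: algebra_simps)
          show ?thesis unfolding e1 e2 using xle D1 by linarith
        qed
        then have "L \<le> 2*D*(X+2) * (2*D)" unfolding L_def LL_def rr_def bbX by (intro mult_right_mono) auto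
        then have "2*L*B \<le> 2*(2*D*(X+2) * (2*D))*B" by (intro mult_right_mono mult_left_mono) auto
        also have "\<dots> = 8 * D^2 * B * (X + 2)" by (simp add: power2_eq_square algebra_simps)
        finally have "t \<le> 8 * D^2 * B * (X + 2)" unfolding t_def .
        then have t1: "real t \<le> 8 * real D ^ 2 * real B * (real X + 2)"
          by (metis (mono_tags, lifting) of_nat_add of_nat_le_iff of_nat_mult of_nat_numeral of_nat_power)
        have ll: "real (lg n) \<le> 2 * log 2 (real n)" "1 \<le> log 2 (real n)" using lg_le_log[OF n2] by auto
        have "real X = real (lg n) * real cc" unfolding X_def by simp
        also have "\<dots> \<le> 2 * log 2 (real n) * real cc" using ll by (intro mult_right_mono) auto
        finally have "real X + 2 \<le> 2 * (real cc + 1) * log 2 (real n)" using ll by (simp add: algebra_simps)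
        then have "8 * real D ^ 2 * real B * (real X + 2) \<le> 8 * real D ^ 2 * real B * (2 * (real cc + 1) * log 2 (real n))"
          by (intro mult_left_mono) auto
        with t1 show ?thesis unfolding K_def by (simp add: algebra_simps)
      qed
      define N where "N = (2::nat) ^ bb n c"
      define g where "g = code n c D"
      have goodg: "good N D (rr n c D) g"
      proof -
        have "N ^ (D+1) = 2 ^ (bb n c * (D+1))" unfolding N_def
          by (rule power_mult[symmetric])
        also have "\<dots> = 2 ^ ((D+1) * bb n c)" by (simp only: mult.commute)
        also have "\<dots> < 2 ^ rr n c D" unfolding rr_def by simp
        finally have "N ^ (D+1) < 2 ^ rr n c D" .
        then have "\<exists>g. good N D (rr n c D) g" using code_exists D1 by blast
        then show ?thesis unfolding g_def code_def N_def by (rule someI_ex)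
      qed
      have idN: "\<And>v. v \<in> V \<Longrightarrow> v < N" unfolding N_def using ids c1 n2 by (intro id_bound) auto
      have "local_broadcast_solved Abeep Aout n c D V E m t"
        unfolding local_broadcast_solved_def
      proof (intro ballI)
        fix v u assume v: "v \<in> V" and u: "u \<in> nbrs V E v"
        let ?inp = "local_input n c D V E m"
        have Evu: "E v u" using u by (simp add: nbrs_def)
        then have uV: "u \<in> V" and uv: "u \<noteq> v" and vu: "v \<in> nbrs V E u" using Esym v by (auto simp: nbrs_def)
        define h where "h = history Abeep ?inp V E t u"
        have h_eq: "h = map (\<lambda>R. if sched (?inp u) R then Beeped
           else Heard (\<exists>x\<in>nbrs V E u. sched (?inp x) R)) [0..<t]" unfolding h_def by (rule history_eq)
        define Y where "Y = (nbrs V E u - {v}) \<union> {u}"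
        have YN: "Y \<subseteq> {..<N}" using idN uV unfolding Y_def nbrs_def by auto
        have cY: "card Y \<le> D"
        proof -
          have "card (nbrs V E u - {v}) = card (nbrs V E u) - 1" using vu nbfin by simp
          moreover have "card (nbrs V E u) > 0" using vu nbfin card_gt_0_iff by blast
          ultimately have "card (nbrs V E u - {v}) + 1 \<le> D" using deg[OF uV] by linarith
          moreover have "card Y \<le> card (nbrs V E u - {v}) + 1" unfolding Y_def
            using card_Un_le[of "nbrs V E u - {v}" "{u}"] by simp
          ultimately show ?thesis by simp
        qed
        have vY: "v \<notin> Y" using uv unfolding Y_def by auto
        have "\<exists>i<rr n c D. \<forall>y\<in>Y. g y i \<noteq> g v i" using goodg idN[OF v] YN cY vY unfolding good_def by blast
        then have "\<exists>i. i<rr n c D \<and> (\<forall>y\<in>Y. g y i \<noteq> g v i)" by blast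
        define i0 where "i0 = (LEAST i. i < rr n c D \<and> (\<forall>y\<in>Y. g y i \<noteq> g v i))"
        have i0: "i0 < rr n c D" "\<forall>y\<in>Y. g y i0 \<noteq> g v i0"
          using LeastI_ex[OF \<open>\<exists>i. i<rr n c D \<and> (\<forall>y\<in>Y. g y i \<noteq> g v i)\<close>] unfolding i0_def by auto
        define a where "a = g v i0"
        have a2: "a < 2 * D" using goodg idN[OF v] i0(1) unfolding good_def a_def by blast
        define j where "j = i0 * (2 * D) + a"
        have inpf: "\<And>x. inp_n (?inp x) = n" "\<And>x. inp_c (?inp x) = c" "\<And>x. inp_delta (?inp x) = D"
          "\<And>x. inp_id (?inp x) = x" "\<And>x. inp_msg (?inp x) = m x" "\<And>x. inp_nbrs (?inp x) = nbrs V E x"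
          by (simp_all add: local_input_def)
        have key: "(h ! (p * (2 * L) + s * L + j) = Heard True) = (p < length (m v) \<and> (s = 0 \<or> m v ! p))"
          if p: "p < B" and s: "s \<le> 1" for p s
        proof -
          define R where "R = p * (2 * L) + s * L + j"
          have jL: "j < L"
          proof -
            have "j < i0 * (2*D) + 2 * D" using a2 j_def by simp
            also have "\<dots> = (i0+1) * (2*D)" by simp
            also have "\<dots> \<le> rr n c D * (2*D)" using i0(1) by (intro mult_right_mono) auto
            finally show ?thesis unfolding L_def LL_def .
          qed
          have s01: "s = 0 \<or> s = 1" using s by auto
          have "R < p * (2 * L) + 2 * L" unfolding R_def using s01 jL by auto
          also have "\<dots> = (p + 1) * (2 * L)" by simp
          also have "\<dots> \<le> B * (2 * L)" using p by (intro mult_right_mono) auto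
          finally have Rt: "R < t" unfolding t_def by (simp add: ac_simps)
          have sch: "sched (?inp x) R = (g x i0 = a \<and> p < length (m x) \<and> (s = 0 \<or> m x ! p))" for x
            using sched_at[of "?inp x" i0 a s p] D1 i0(1) a2 s
            unfolding R_def j_def L_def g_def inpf by simp
          have hR: "h ! R = (if sched (?inp u) R then Beeped else Heard (\<exists>x\<in>nbrs V E u. sched (?inp x) R))"
            using h_eq Rt by simp
          have nu: "\<not> sched (?inp u) R" using sch i0(2) unfolding Y_def a_def by auto
          have "(\<exists>x\<in>nbrs V E u. sched (?inp x) R) = sched (?inp v) R"
          proof
            assume "\<exists>x\<in>nbrs V E u. sched (?inp x) R"
            then obtain x where x: "x \<in> nbrs V E u" "sched (?inp x) R" by blast
            show "sched (?inp v) R"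
            proof (cases "x = v")
              case True then show ?thesis using x by simp
            next
              case False
              then have "x \<in> Y" using x unfolding Y_def by auto
              then show ?thesis using x sch i0(2) unfolding a_def by auto
            qed
          next
            assume "sched (?inp v) R" then show "\<exists>x\<in>nbrs V E u. sched (?inp x) R" using vu by blast
          qed
          then show ?thesis using hR nu sch[of v] unfolding R_def[symmetric] a_def by simp
        qed
        have Pdef: "length h div (2 * L) = B" using h_eq L0 unfolding t_def by simp
        have out: "Aout (?inp u) h v = Some (map (\<lambda>p. h ! (p * (2 * L) + L + j) = Heard True)
                   (filter (\<lambda>p. h ! (p * (2 * L) + j) = Heard True) [0..<B]))"
          unfolding Aout_def Let_def inpf L_def[symmetric] g_def[symmetric] Y_def[symmetric]
            i0_def[symmetric] a_def[symmetric] j_def[symmetric] Pdef by simp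
        have f: "filter (\<lambda>p. h ! (p * (2 * L) + j) = Heard True) [0..<B] = filter (\<lambda>p. p < length (m v)) [0..<B]"
        proof (rule filter_cong)
          fix p assume "p \<in> set [0..<B]"
          then have "p < B" by simp
          then show "(h ! (p * (2 * L) + j) = Heard True) = (p < length (m v))"
            using key[of p 0] by simp
        qed simp
        have lenB: "length (m v) \<le> B" using ml v by simp
        have "filter (\<lambda>p. p < length (m v)) [0..<B] = [0..<length (m v)]"
          using lenB by (simp add: filter_less_upt min_def)
        moreover have "map (\<lambda>p. h ! (p * (2 * L) + L + j) = Heard True) [0..<length (m v)] = map (\<lambda>p. m v ! p) [0..<length (m v)]"
        proof (rule map_cong)
          fix p assume "p \<in> set [0..<length (m v)]"
          then have "p < length (m v)" by simp
          then show "(h ! (p * (2 * L) + L + j) = Heard True) = m v ! p"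
            using key[of p 1] lenB by simp
        qed simp
        ultimately have "Aout (?inp u) h v = Some (m v)" using out f by (simp add: map_nth)
        then show "Aout (?inp u) (history Abeep ?inp V E t u) v = Some (m v)" unfolding h_def .
      qed
      then show ?thesis using tbound by blast
    qed
  qed
qed

end
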